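(* Let $\{X_t\}_{t\in\mathbb N^+}$ be a real-valued process adapted to a filtration $\{\mathcal F_t\}_{t\in\mathbb N}$ with $\mathcal F_0$ trivial, such that for all $t\in\mathbb N^+$, $\mathbb E[X_t\mid\mathcal F_{t-1}]=\mu$ (an unknown constant) and $\mathbb E[(X_t-\mu)^2\mid\mathcal F_{t-1}]\le\sigma^2$ ($\sigma^2$ known). Let $\alpha\in(0,1)$, let $\{\lambda_t\}_{t\in\mathbb N^+}$ be any predictable process, and let $\phi$ be a Catoni-type influence function. Define $$\mathrm{CI}^{\mathsf C}_t=\left\{m\in\mathbb R:\ -\frac{\sigma^2\sum_{i=1}^t\lambda_i^2}{2}-\log(2/\alpha)\le\sum_{i=1}^t\phi(\lambda_i(X_i-m))\le\frac{\sigma^2\sum_{i=1}^t\lambda_i^2}{2}+\log(2/\alpha)\right\}.$$ Then $\Pr[\forall t\in\mathbb N^+,\ \mu\in\mathrm{CI}^{\mathsf C}_t]\ge1-\alpha$.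
   Context: A process $\{\lambda_t\}$ is predictable if each $\lambda_t$ is $\mathcal F_{t-1}$-measurable. A function $\phi:\mathbb R\to\mathbb R$ is a Catoni-type influence function if it is increasing and $-\log(1-x+x^2/2)\le\phi(x)\le\log(1+x+x^2/2)$ for all $x\in\mathbb R$. *)

theory Defs
  imports "HOL-Probability.Probability"
begin

definition catoni_type :: "(real \<Rightarrow> real) \<Rightarrow> bool" where
  "catoni_type \<phi> \<longleftrightarrow> mono \<phi> \<and>
     (\<forall>x. - ln (1 - x + x^2 / 2) \<le> \<phi> x \<and> \<phi> x \<le> ln (1 + x + x^2 / 2))"

definition CI_catoni ::
  "real \<Rightarrow> real \<Rightarrow> (real \<Rightarrow> real) \<Rightarrow> (nat \<Rightarrow> 'a \<Rightarrow> real) \<Rightarrow> (nat \<Rightarrow> 'a \<Rightarrow> real)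
     \<Rightarrow> nat \<Rightarrow> 'a \<Rightarrow> real set" where
  "CI_catoni \<sigma> \<alpha> \<phi> lam X t \<omega> =
     {m. - (\<sigma>^2 * (\<Sum>i=1..t. (lam i \<omega>)^2)) / 2 - ln (2 / \<alpha>)
            \<le> (\<Sum>i=1..t. \<phi> (lam i \<omega> * (X i \<omega> - m)))
       \<and> (\<Sum>i=1..t. \<phi> (lam i \<omega> * (X i \<omega> - m)))
            \<le> (\<sigma>^2 * (\<Sum>i=1..t. (lam i \<omega>)^2)) / 2 + ln (2 / \<alpha>)}"

end

theory Submission
  imports Defs
begin

lemma step_lemma:
  fixes M F :: "'a measure" and X l G :: "'a \<Rightarrow> real" and \<phi> :: "real \<Rightarrow> real"
    and \<mu> \<sigma> :: real
  assumes P: "prob_space M" and sub: "subalgebra M F"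
    and Xm[measurable]: "X \<in> borel_measurable M" and Xi: "integrable M X"
    and cm: "AE \<omega> in M. real_cond_exp M F X \<omega> = \<mu>"
    and cv: "AE \<omega> in M. nn_cond_exp M F (\<lambda>\<omega>. ennreal ((X \<omega> - \<mu>)^2)) \<omega> \<le> ennreal (\<sigma>^2)"
    and lF: "l \<in> borel_measurable F" and GF: "G \<in> borel_measurable F" and G0: "\<And>x. 0 \<le> G x"
    and phim[measurable]: "\<phi> \<in> borel_measurable borel"
    and phib: "\<And>x. \<phi> x \<le> ln (1 + x + x^2/2)"
  shows "(\<integral>\<^sup>+x. ennreal (G x * exp (\<phi> (l x * (X x - \<mu>)) - \<sigma>^2 * (l x)^2 / 2)) \<partial>M)
           \<le> (\<integral>\<^sup>+x. ennreal (G x) \<partial>M)"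
proof -
  interpret prob_space M by (rule P)
  interpret S: sigma_finite_subalgebra M F
    by (rule finite_measure_subalgebra_is_sigma_finite)
       (simp add: finite_measure_subalgebra_def finite_measure_subalgebra_axioms_def sub finite_measure_axioms)
  have lM[measurable]: "l \<in> borel_measurable M" using measurable_from_subalg[OF sub lF] .
  have GM[measurable]: "G \<in> borel_measurable M" using measurable_from_subalg[OF sub GF] .
  note [measurable] = lF GF
  define Y where "Y x = X x - \<mu>" for x
  have Ym[measurable]: "Y \<in> borel_measurable M" unfolding Y_def by measurable
  have Yi: "integrable M Y" unfolding Y_def using Xi by auto
  have "(\<integral>\<^sup>+x. ennreal ((Y x)^2) \<partial>M) = (\<integral>\<^sup>+x. 1 * ennreal ((X x - \<mu>)^2) \<partial>M)"
    unfolding Y_def by simp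
  also have "\<dots> = (\<integral>\<^sup>+x. 1 * nn_cond_exp M F (\<lambda>\<omega>. ennreal ((X \<omega> - \<mu>)^2)) x \<partial>M)"
    by (rule S.nn_cond_exp_intg[symmetric]) auto
  also have "\<dots> \<le> (\<integral>\<^sup>+x. ennreal (\<sigma>^2) \<partial>M)"
    using cv by (intro nn_integral_mono_AE) auto
  also have "\<dots> = ennreal (\<sigma>^2)" by (simp add: emeasure_space_1)
  finally have Y2fin: "(\<integral>\<^sup>+x. ennreal ((Y x)^2) \<partial>M) < \<infinity>" by (simp add: le_less_trans)
  have Y2i: "integrable M (\<lambda>x. (Y x)^2)"
    by (rule integrableI_nonneg) (use Y2fin in auto)
  have key1: "(\<integral>x. f x * (Y x)^2 \<partial>M) \<le> (\<integral>x. f x * \<sigma>^2 \<partial>M)"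
    if fF: "f \<in> borel_measurable F" and fb: "\<And>x. 0 \<le> f x \<and> f x \<le> B" for f B
  proof -
    have fM[measurable]: "f \<in> borel_measurable M" using measurable_from_subalg[OF sub fF] .
    note fF[measurable]
    have i1: "integrable M (\<lambda>x. f x * (Y x)^2)"
    proof (rule Bochner_Integration.integrable_bound[OF integrable_mult_right[OF Y2i, of B]])
      have "\<And>x. f x * (Y x)^2 \<le> B * (Y x)^2" using fb by (simp add: mult_right_mono)
      then show "AE x in M. norm (f x * (Y x)^2) \<le> norm (B * (Y x)^2)"
        using fb by (intro AE_I2) (smt (verit) real_norm_def zero_le_power2 mult_nonneg_nonneg)
    qed simp
    have i2: "integrable M (\<lambda>x. f x * \<sigma>^2)"
      by (rule integrable_const_bound[where B="B * \<sigma>^2"]) (use fb in \<open>auto intro!: mult_right_mono\<close>)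
    have "ennreal (\<integral>x. f x * (Y x)^2 \<partial>M) = (\<integral>\<^sup>+x. ennreal (f x * (Y x)^2) \<partial>M)"
      by (rule nn_integral_eq_integral[OF i1, symmetric]) (use fb in auto)
    also have "\<dots> = (\<integral>\<^sup>+x. ennreal (f x) * ennreal ((X x - \<mu>)^2) \<partial>M)"
      using fb by (simp add: Y_def ennreal_mult)
    also have "\<dots> = (\<integral>\<^sup>+x. ennreal (f x) * nn_cond_exp M F (\<lambda>\<omega>. ennreal ((X \<omega> - \<mu>)^2)) x \<partial>M)"
      by (rule S.nn_cond_exp_intg[symmetric]) auto
    also have "\<dots> \<le> (\<integral>\<^sup>+x. ennreal (f x) * ennreal (\<sigma>^2) \<partial>M)"
      by (rule nn_integral_mono_AE, rule AE_mp[OF cv]) (auto intro!: AE_I2 mult_left_mono)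
    also have "\<dots> = (\<integral>\<^sup>+x. ennreal (f x * \<sigma>^2) \<partial>M)"
      using fb by (simp add: ennreal_mult)
    also have "\<dots> = ennreal (\<integral>x. f x * \<sigma>^2 \<partial>M)"
      by (rule nn_integral_eq_integral[OF i2]) (use fb in auto)
    finally show ?thesis
      by (subst (asm) ennreal_le_iff) (auto intro!: integral_nonneg_AE simp: fb)
  qed
  have key2: "(\<integral>x. f x * Y x \<partial>M) = 0"
    if fF: "f \<in> borel_measurable F" and fb: "\<And>x. \<bar>f x\<bar> \<le> B" for f B
  proof -
    have fM[measurable]: "f \<in> borel_measurable M" using measurable_from_subalg[OF sub fF] .
    have B0: "0 \<le> B" using fb[of undefined] by linarith
    have iX: "integrable M (\<lambda>x. f x * X x)"
      by (rule Bochner_Integration.integrable_bound[OF integrable_mult_right[OF integrable_abs[OF Xi], of B]])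
         (use fb B0 in \<open>auto simp: abs_mult intro!: AE_I2 mult_right_mono\<close>)
    have iC: "integrable M (\<lambda>x. f x * \<mu>)"
      by (rule integrable_const_bound[where B="B * \<bar>\<mu>\<bar>"]) (use fb in \<open>auto simp: abs_mult intro!: mult_right_mono\<close>)
    have "(\<integral>x. f x * X x \<partial>M) = (\<integral>x. f x * real_cond_exp M F X x \<partial>M)"
      by (rule S.real_cond_exp_intg(2)[symmetric]) (use iX fF in auto)
    also have "\<dots> = (\<integral>x. f x * \<mu> \<partial>M)"
      using cm by (intro integral_cong_AE) auto
    finally have e: "(\<integral>x. f x * X x \<partial>M) = (\<integral>x. f x * \<mu> \<partial>M)" .
    have "(\<integral>x. f x * Y x \<partial>M) = (\<integral>x. f x * X x - f x * \<mu> \<partial>M)"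
      unfolding Y_def by (simp add: algebra_simps)
    also have "\<dots> = 0" using Bochner_Integration.integral_diff[OF iX iC] e by simp
    finally show ?thesis .
  qed
  have ib: "integrable M (\<lambda>x. f x * g x)"
    if fM: "f \<in> borel_measurable M" and fb: "\<And>x. \<bar>f x\<bar> \<le> B" and gi: "integrable M g" for f g :: "'a \<Rightarrow> real" and B :: real
  proof (rule Bochner_Integration.integrable_bound[OF integrable_mult_right[OF integrable_abs[OF gi], of B]])
    have B0: "0 \<le> B" using fb[of undefined] by linarith
    show "AE x in M. norm (f x * g x) \<le> norm (B * \<bar>g x\<bar>)"
      using fb B0 by (intro AE_I2) (simp add: abs_mult mult_right_mono)
    show "(\<lambda>x. f x * g x) \<in> borel_measurable M" using fM gi by measurable
  qed
  define w where "w K x = (if G x \<le> real K \<and> \<bar>l x\<bar> \<le> real K then G x else 0)" for K :: nat and x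
  define a where "a x = \<sigma>^2 * (l x)^2 / 2" for x
  define e where "e x = exp (- a x)" for x
  have wF[measurable]: "w K \<in> borel_measurable F" for K unfolding w_def by measurable
  have wM[measurable]: "w K \<in> borel_measurable M" for K using measurable_from_subalg[OF sub wF] .
  have aF[measurable]: "a \<in> borel_measurable F" unfolding a_def by measurable
  have eF[measurable]: "e \<in> borel_measurable F" unfolding e_def by measurable
  have a0: "0 \<le> a x" for x unfolding a_def by simp
  have e0: "0 < e x" "e x \<le> 1" for x unfolding e_def using a0[of x] by auto
  have e1: "e x * (1 + a x) \<le> 1" for x
  proof -
    have "1 + a x \<le> exp (a x)" by simp
    then have "e x * (1 + a x) \<le> e x * exp (a x)" using e0[of x] by (intro mult_left_mono) auto
    also have "\<dots> = 1" unfolding e_def by (simp add: exp_minus field_simps)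
    finally show ?thesis .
  qed
  have wb: "0 \<le> w K x" "w K x \<le> real K" "w K x \<le> G x" for K x
    unfolding w_def using G0[of x] by auto
  have wl: "w K x * (l x)^2 \<le> real K * (real K)^2" "w K x * \<bar>l x\<bar> \<le> real K * real K" for K x
  proof -
    have "w K x * (l x)^2 \<le> real K * (real K)^2 \<and> w K x * \<bar>l x\<bar> \<le> real K * real K"
    proof (cases "G x \<le> real K \<and> \<bar>l x\<bar> \<le> real K")
      case True
      then have "(l x)^2 \<le> (real K)^2" by (metis abs_le_square_iff abs_of_nat)
      then show ?thesis using True G0[of x] unfolding w_def
        by (auto intro!: mult_mono)
    qed (auto simp: w_def)
    then show "w K x * (l x)^2 \<le> real K * (real K)^2" "w K x * \<bar>l x\<bar> \<le> real K * real K" by auto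
  qed
  have claim: "(\<integral>\<^sup>+x. ennreal (w K x * exp (\<phi> (l x * Y x) - a x)) \<partial>M) \<le> (\<integral>\<^sup>+x. ennreal (G x) \<partial>M)" for K
  proof -
    define f1 where "f1 x = w K x * e x" for x
    define f2 where "f2 x = w K x * e x * l x" for x
    define f3 where "f3 x = w K x * e x * (l x)^2 / 2" for x
    have [measurable]: "f1 \<in> borel_measurable F" "f2 \<in> borel_measurable F" "f3 \<in> borel_measurable F"
      unfolding f1_def f2_def f3_def by measurable
    have [measurable]: "f1 \<in> borel_measurable M" "f2 \<in> borel_measurable M" "f3 \<in> borel_measurable M"
      using measurable_from_subalg[OF sub] \<open>f1 \<in> borel_measurable F\<close> \<open>f2 \<in> borel_measurable F\<close>
        \<open>f3 \<in> borel_measurable F\<close> by blast+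
    have b1: "0 \<le> f1 x \<and> f1 x \<le> real K" for x
    proof -
      have "w K x * e x \<le> w K x * 1" using wb[of K x] e0[of x] by (intro mult_left_mono) auto
      then show ?thesis unfolding f1_def using wb[of K x] e0[of x] by auto
    qed
    have b2: "\<bar>f2 x\<bar> \<le> real K * real K" for x
    proof -
      have "\<bar>f2 x\<bar> = e x * (w K x * \<bar>l x\<bar>)" unfolding f2_def using wb[of K x] e0[of x]
        by (simp add: abs_mult)
      also have "\<dots> \<le> 1 * (real K * real K)"
        by (rule mult_mono) (use wl(2)[of K x] e0[of x] wb[of K x] in auto)
      finally show ?thesis by simp
    qed
    have b3: "0 \<le> f3 x \<and> f3 x \<le> real K * (real K)^2" for x
    proof -
      have "f3 x = e x * (w K x * (l x)^2) / 2" unfolding f3_def by simp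
      also have "\<dots> \<le> 1 * (real K * (real K)^2) / 2"
        by (intro divide_right_mono, rule mult_mono) (use wl(1)[of K x] e0[of x] wb[of K x] in auto)
      finally have h: "f3 x \<le> real K * (real K)^2 / 2" by simp
      have "0 \<le> f3 x" unfolding f3_def using wb[of K x] e0[of x] by auto
      then show ?thesis using h by linarith
    qed
    define R where "R x = f1 x + f2 x * Y x + f3 x * (Y x)^2" for x
    have poly_pos: "0 < 1 + z + z^2/2" for z :: real
    proof -
      have "0 \<le> (z + 1)^2" by simp
      then show ?thesis by (simp add: power2_eq_square algebra_simps)
    qed
    have pw: "w K x * exp (\<phi> (l x * Y x) - a x) \<le> R x" for x
    proof -
      let ?z = "l x * Y x"
      have "exp (\<phi> ?z) \<le> exp (ln (1 + ?z + ?z^2/2))" using phib[of ?z] by simp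
      also have "\<dots> = 1 + ?z + ?z^2/2" using poly_pos[of ?z] by simp
      finally have ez: "exp (\<phi> ?z) \<le> 1 + ?z + ?z^2/2" .
      have "w K x * exp (\<phi> ?z - a x) = (w K x * e x) * exp (\<phi> ?z)"
        unfolding e_def by (simp add: exp_diff exp_minus field_simps)
      also have "\<dots> \<le> (w K x * e x) * (1 + ?z + ?z^2/2)"
        using ez wb[of K x] e0[of x] by (intro mult_left_mono) auto
      also have "\<dots> = R x" unfolding R_def f1_def f2_def f3_def by (simp add: power2_eq_square algebra_simps)
      finally show ?thesis .
    qed
    have R0: "0 \<le> R x" for x
      using pw[of x] wb[of K x] by (smt (verit) exp_gt_zero mult_nonneg_nonneg)
    have i1: "integrable M f1" by (rule integrable_const_bound[where B="real K"]) (use b1 in auto)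
    have i2: "integrable M (\<lambda>x. f2 x * Y x)" by (rule ib[OF _ b2 Yi]) measurable
    have i3: "integrable M (\<lambda>x. f3 x * (Y x)^2)"
      by (rule ib[of f3 "real K * (real K)^2" "\<lambda>x. (Y x)^2", OF _ _ Y2i]) (use b3 in auto)
    have iR: "integrable M R" unfolding R_def using i1 i2 i3 by auto
    have iw: "integrable M (w K)" by (rule integrable_const_bound[where B="real K"]) (use wb in auto)
    have i3': "integrable M (\<lambda>x. f3 x * \<sigma>^2)" by (rule integrable_mult_left) (rule ib[of f3 "real K * (real K)^2" "\<lambda>x. 1", simplified], measurable, use b3 in auto)
    have "(\<integral>x. R x \<partial>M) = (\<integral>x. f1 x \<partial>M) + (\<integral>x. f2 x * Y x \<partial>M) + (\<integral>x. f3 x * (Y x)^2 \<partial>M)"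
      unfolding R_def using i1 i2 i3 by simp
    also have "(\<integral>x. f2 x * Y x \<partial>M) = 0" by (rule key2[OF _ b2]) measurable
    also have "(\<integral>x. f3 x * (Y x)^2 \<partial>M) \<le> (\<integral>x. f3 x * \<sigma>^2 \<partial>M)" by (rule key1[OF _ b3]) measurable
    also have "(\<integral>x. f1 x \<partial>M) + 0 + (\<integral>x. f3 x * \<sigma>^2 \<partial>M) = (\<integral>x. f1 x + f3 x * \<sigma>^2 \<partial>M)"
      using i1 i3' by simp
    also have "\<dots> \<le> (\<integral>x. w K x \<partial>M)"
    proof (rule integral_mono[OF _ iw])
      show "integrable M (\<lambda>x. f1 x + f3 x * \<sigma>^2)" using i1 i3' by simp
      fix x
      have "f1 x + f3 x * \<sigma>^2 = w K x * (e x * (1 + a x))"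
        unfolding f1_def f3_def a_def by (simp add: algebra_simps)
      also have "\<dots> \<le> w K x * 1" using e1[of x] wb[of K x] by (intro mult_left_mono) auto
      finally show "f1 x + f3 x * \<sigma>^2 \<le> w K x" by simp
    qed
    finally have intle: "(\<integral>x. R x \<partial>M) \<le> (\<integral>x. w K x \<partial>M)" by simp
    have "(\<integral>\<^sup>+x. ennreal (w K x * exp (\<phi> (l x * Y x) - a x)) \<partial>M) \<le> (\<integral>\<^sup>+x. ennreal (R x) \<partial>M)"
      using pw by (intro nn_integral_mono) (simp add: ennreal_leI)
    also have "\<dots> = ennreal (\<integral>x. R x \<partial>M)" by (rule nn_integral_eq_integral[OF iR]) (use R0 in auto)
    also have "\<dots> \<le> ennreal (\<integral>x. w K x \<partial>M)" using intle by (simp add: ennreal_leI)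
    also have "\<dots> = (\<integral>\<^sup>+x. ennreal (w K x) \<partial>M)" by (rule nn_integral_eq_integral[OF iw, symmetric]) (use wb in auto)
    also have "\<dots> \<le> (\<integral>\<^sup>+x. ennreal (G x) \<partial>M)" using wb by (intro nn_integral_mono) (simp add: ennreal_leI)
    finally show ?thesis .
  qed
  define r where "r x = exp (\<phi> (l x * Y x) - a x)" for x
  have rM[measurable]: "r \<in> borel_measurable M" unfolding r_def a_def by measurable
  have r0: "0 \<le> r x" for x unfolding r_def by simp
  have sup: "(SUP K. ennreal (w K x * r x)) = ennreal (G x * r x)" for x
  proof (rule antisym)
    show "(SUP K. ennreal (w K x * r x)) \<le> ennreal (G x * r x)"
      using wb r0 by (intro SUP_least ennreal_leI mult_right_mono) auto
    obtain K0 :: nat where "max (G x) \<bar>l x\<bar> \<le> real K0" using real_arch_simple by blast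
    then have "w K0 x = G x" unfolding w_def by auto
    then show "ennreal (G x * r x) \<le> (SUP K. ennreal (w K x * r x))"
      by (intro SUP_upper2[of K0]) auto
  qed
  have inc: "incseq (\<lambda>K x. ennreal (w K x * r x))"
  proof (rule incseq_SucI, rule le_funI)
    fix K x
    have "w K x \<le> w (Suc K) x" unfolding w_def using G0[of x] by auto
    then show "ennreal (w K x * r x) \<le> ennreal (w (Suc K) x * r x)"
      using r0[of x] by (intro ennreal_leI mult_right_mono) auto
  qed
  have "(\<integral>\<^sup>+x. ennreal (G x * exp (\<phi> (l x * (X x - \<mu>)) - \<sigma>^2 * (l x)^2 / 2)) \<partial>M)
      = (\<integral>\<^sup>+x. ennreal (G x * r x) \<partial>M)"
    unfolding r_def a_def Y_def by simp
  also have "\<dots> = (\<integral>\<^sup>+x. (SUP K. ennreal (w K x * r x)) \<partial>M)"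
    by (simp add: sup)
  also have "\<dots> = (SUP K. (\<integral>\<^sup>+x. ennreal (w K x * r x) \<partial>M))"
    by (rule nn_integral_monotone_convergence_SUP[OF inc]) measurable
  also have "\<dots> \<le> (\<integral>\<^sup>+x. ennreal (G x) \<partial>M)"
    using claim unfolding r_def by (intro SUP_least) auto
  finally show ?thesis .
qed

lemma upper_lemma:
  fixes M :: "'a measure" and F :: "nat \<Rightarrow> 'a measure"
    and X lam :: "nat \<Rightarrow> 'a \<Rightarrow> real" and \<phi> :: "real \<Rightarrow> real"
    and \<mu> \<sigma> c :: real
  assumes P: "prob_space M"
    and subalg: "\<And>t. subalgebra M (F t)"
    and mono_F: "\<And>s t. s \<le> t \<Longrightarrow> sets (F s) \<subseteq> sets (F t)"
    and adapted: "\<And>t. t \<ge> 1 \<Longrightarrow> X t \<in> borel_measurable (F t)"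
    and integrable: "\<And>t. t \<ge> 1 \<Longrightarrow> integrable M (X t)"
    and cond_mean: "\<And>t. t \<ge> 1 \<Longrightarrow> AE \<omega> in M. real_cond_exp M (F (t - 1)) (X t) \<omega> = \<mu>"
    and cond_var: "\<And>t. t \<ge> 1 \<Longrightarrow>
        AE \<omega> in M. nn_cond_exp M (F (t - 1)) (\<lambda>\<omega>. ennreal ((X t \<omega> - \<mu>)^2)) \<omega> \<le> ennreal (\<sigma>^2)"
    and predictable: "\<And>t. t \<ge> 1 \<Longrightarrow> lam t \<in> borel_measurable (F (t - 1))"
    and phim[measurable]: "\<phi> \<in> borel_measurable borel"
    and phib: "\<And>x. \<phi> x \<le> ln (1 + x + x^2/2)"
    and c: "1 < c"
  shows "{\<omega> \<in> space M. \<exists>t\<ge>1. (\<sigma>^2 * (\<Sum>i=1..t. (lam i \<omega>)^2)) / 2 + ln c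
             < (\<Sum>i=1..t. \<phi> (lam i \<omega> * (X i \<omega> - \<mu>)))} \<in> sets M
     \<and> measure M {\<omega> \<in> space M. \<exists>t\<ge>1. (\<sigma>^2 * (\<Sum>i=1..t. (lam i \<omega>)^2)) / 2 + ln c
             < (\<Sum>i=1..t. \<phi> (lam i \<omega> * (X i \<omega> - \<mu>)))} \<le> 1 / c"
proof -
  interpret prob_space M by (rule P)
  define fac where "fac i x = exp (\<phi> (lam i x * (X i x - \<mu>)) - \<sigma>^2 * (lam i x)^2 / 2)" for i x
  define Mt where "Mt n x = (\<Prod>i=1..n. fac i x)" for n x
  have Mt0: "Mt 0 x = 1" for x unfolding Mt_def by simp
  have MtS: "Mt (Suc n) x = Mt n x * fac (Suc n) x" for n x
    unfolding Mt_def by (simp add: prod.nat_ivl_Suc')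
  have Mt_pos: "0 < Mt n x" for n x unfolding Mt_def fac_def by (intro prod_pos) auto
  have Mt_exp: "Mt n x = exp ((\<Sum>i=1..n. \<phi> (lam i x * (X i x - \<mu>))) - (\<sigma>^2 * (\<Sum>i=1..n. (lam i x)^2)) / 2)" for n x
    unfolding Mt_def fac_def
    by (simp add: exp_sum[symmetric] sum_subtractf sum_divide_distrib sum_distrib_left)
  have spF: "space (F t) = space M" for t using subalg[of t] unfolding subalgebra_def by auto
  have subF: "subalgebra (F t) (F s)" if "s \<le> t" for s t
    using mono_F[OF that] spF unfolding subalgebra_def by auto
  have measF: "f \<in> borel_measurable (F t)" if "s \<le> t" "f \<in> borel_measurable (F s)" for f :: "'a \<Rightarrow> real" and s t
    using measurable_from_subalg[OF subF[OF that(1)] that(2)] .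
  have measM: "f \<in> borel_measurable M" if "f \<in> borel_measurable (F s)" for f :: "'a \<Rightarrow> real" and s
    using measurable_from_subalg[OF subalg that] .
  have facm: "fac i \<in> borel_measurable (F i)" if "i \<ge> 1" for i
  proof -
    have [measurable]: "lam i \<in> borel_measurable (F i)" using measF[OF _ predictable[OF that]] by simp
    have [measurable]: "X i \<in> borel_measurable (F i)" using adapted[OF that] .
    show ?thesis unfolding fac_def by measurable
  qed
  have Mtm: "Mt n \<in> borel_measurable (F n)" for n
  proof (induction n)
    case 0
    then show ?case unfolding Mt_def by simp
  next
    case (Suc n)
    have "Mt n \<in> borel_measurable (F (Suc n))" using measF[OF _ Suc] by simp
    moreover have "fac (Suc n) \<in> borel_measurable (F (Suc n))" using facm by simp
    ultimately show ?case unfolding MtS[abs_def] by measurable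
  qed
  have MtM[measurable]: "Mt n \<in> borel_measurable M" for n using measM[OF Mtm] .
  have MtFle: "Mt j \<in> borel_measurable (F n)" if "j \<le> n" for j n using measF[OF that Mtm] .
  define C where "C n = {x\<in>space M. \<forall>j<n. Mt j x \<le> c}" for n
  define B where "B n = {x\<in>space M. c < Mt n x \<and> (\<forall>j<n. Mt j x \<le> c)}" for n
  have CM[measurable]: "C n \<in> sets M" for n unfolding C_def by measurable
  have BM[measurable]: "B n \<in> sets M" for n unfolding B_def by measurable
  have CF: "C (Suc n) \<in> sets (F n)" for n
  proof -
    have "C (Suc n) = space (F n) \<inter> (\<Inter>j\<in>{..n}. {x\<in>space (F n). Mt j x \<le> c})"
      unfolding C_def spF by (auto simp: less_Suc_eq_le)
    also have "\<dots> \<in> sets (F n)"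
      using MtFle by (intro sets.Int sets.top sets.finite_INT) auto
    finally show ?thesis .
  qed
  have stepN: "(\<integral>\<^sup>+x. ennreal (Mt (Suc N) x * indicator (C (Suc N)) x) \<partial>M)
      \<le> (\<integral>\<^sup>+x. ennreal (Mt N x * indicator (C (Suc N)) x) \<partial>M)" for N
  proof -
    have GF: "(\<lambda>x. Mt N x * indicator (C (Suc N)) x) \<in> borel_measurable (F N)"
      using Mtm[of N] CF[of N] by measurable
    have XM: "X (Suc N) \<in> borel_measurable M" using measM[OF adapted[of "Suc N"]] by simp
    have "(\<integral>\<^sup>+x. ennreal ((Mt N x * indicator (C (Suc N)) x) * exp (\<phi> (lam (Suc N) x * (X (Suc N) x - \<mu>)) - \<sigma>^2 * (lam (Suc N) x)^2 / 2)) \<partial>M)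
      \<le> (\<integral>\<^sup>+x. ennreal (Mt N x * indicator (C (Suc N)) x) \<partial>M)"
      by (rule step_lemma[OF P subalg XM integrable[of "Suc N", simplified] cond_mean[of "Suc N", simplified]
          cond_var[of "Suc N", simplified] predictable[of "Suc N", simplified] GF _ phim phib])
         (simp add: less_imp_le[OF Mt_pos])
    moreover have "\<And>x. (Mt N x * indicator (C (Suc N)) x) * exp (\<phi> (lam (Suc N) x * (X (Suc N) x - \<mu>)) - \<sigma>^2 * (lam (Suc N) x)^2 / 2)
       = Mt (Suc N) x * indicator (C (Suc N)) x"
      by (simp add: MtS fac_def)
    ultimately show ?thesis by simp
  qed
  have split: "ennreal (Mt N x * indicator (C N) x) = ennreal (Mt N x * indicator (C (Suc N)) x) + ennreal (Mt N x * indicator (B N) x)" for N x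
  proof -
    have "indicator (C N) x = indicator (C (Suc N)) x + (indicator (B N) x :: real)"
      by (auto simp: indicator_def C_def B_def less_Suc_eq)
    then have "Mt N x * indicator (C N) x = Mt N x * indicator (C (Suc N)) x + Mt N x * indicator (B N) x"
      by (simp add: distrib_left)
    then show ?thesis using Mt_pos[of N x]
      by (simp only:) (rule ennreal_plus, auto)
  qed
  have inv: "(\<integral>\<^sup>+x. ennreal (Mt N x * indicator (C N) x) \<partial>M)
      + (\<Sum>k<N. \<integral>\<^sup>+x. ennreal (Mt k x * indicator (B k) x) \<partial>M) \<le> 1" for N
  proof (induction N)
    case 0
    have "C 0 = space M" unfolding C_def by auto
    then show ?case by (simp add: Mt0 emeasure_space_1 ennreal_indicator nn_integral_indicator)
  next
    case (Suc N)
    have "(\<integral>\<^sup>+x. ennreal (Mt N x * indicator (C N) x) \<partial>M)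
      = (\<integral>\<^sup>+x. ennreal (Mt N x * indicator (C (Suc N)) x) \<partial>M) + (\<integral>\<^sup>+x. ennreal (Mt N x * indicator (B N) x) \<partial>M)"
      unfolding split by (rule nn_integral_add) auto
    then have "(\<integral>\<^sup>+x. ennreal (Mt (Suc N) x * indicator (C (Suc N)) x) \<partial>M)
      + (\<Sum>k<Suc N. \<integral>\<^sup>+x. ennreal (Mt k x * indicator (B k) x) \<partial>M)
      \<le> (\<integral>\<^sup>+x. ennreal (Mt N x * indicator (C N) x) \<partial>M)
      + (\<Sum>k<N. \<integral>\<^sup>+x. ennreal (Mt k x * indicator (B k) x) \<partial>M)"
      (is "?a + ?S1 \<le> ?b1 + ?S")
    proof -
      let ?b = "(\<integral>\<^sup>+x. ennreal (Mt N x * indicator (C (Suc N)) x) \<partial>M)"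
      let ?d = "(\<integral>\<^sup>+x. ennreal (Mt N x * indicator (B N) x) \<partial>M)"
      have "?S1 = ?S + ?d" by (simp only: sum.lessThan_Suc)
      then have "?a + ?S1 = ?a + (?S + ?d)" by (simp only:)
      also have "\<dots> \<le> ?b + (?S + ?d)" by (rule add_right_mono[OF stepN])
      also have "\<dots> = (?b + ?d) + ?S" by (simp add: ac_simps)
      also have "\<dots> = ?b1 + ?S" using \<open>?b1 = ?b + ?d\<close> by (simp only:)
      finally show ?thesis .
    qed
    then show ?case using Suc.IH by (rule order_trans)
  qed
  have Bbound: "ennreal c * emeasure M (B k) \<le> (\<integral>\<^sup>+x. ennreal (Mt k x * indicator (B k) x) \<partial>M)" for k
  proof -
    have "ennreal c * emeasure M (B k) = (\<integral>\<^sup>+x. ennreal c * indicator (B k) x \<partial>M)"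
      by (rule nn_integral_cmult_indicator[symmetric]) simp
    also have "\<dots> \<le> (\<integral>\<^sup>+x. ennreal (Mt k x * indicator (B k) x) \<partial>M)"
    proof (rule nn_integral_mono)
      fix x
      show "ennreal c * indicator (B k) x \<le> ennreal (Mt k x * indicator (B k) x)"
        by (cases "x \<in> B k") (auto simp: B_def intro!: ennreal_leI)
    qed
    finally show ?thesis .
  qed
  have sumle: "(\<Sum>k. ennreal c * emeasure M (B k)) \<le> 1"
  proof (rule suminf_le_const)
    fix N
    have "(\<Sum>k<N. ennreal c * emeasure M (B k)) \<le> (\<Sum>k<N. \<integral>\<^sup>+x. ennreal (Mt k x * indicator (B k) x) \<partial>M)"
      by (intro sum_mono Bbound)
    also have "\<dots> \<le> 1" using inv[of N] by (rule order_trans[rotated]) (rule add_increasing, auto)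
    finally show "(\<Sum>k<N. ennreal c * emeasure M (B k)) \<le> 1" .
  qed auto
  have disj: "disjoint_family B"
  proof (unfold disjoint_family_on_def, intro ballI impI)
    fix m n :: nat assume "m \<noteq> n"
    then consider "m < n" | "n < m" by linarith
    then show "B m \<inter> B n = {}" by cases (force simp: B_def)+
  qed
  define E where "E = {\<omega> \<in> space M. \<exists>t\<ge>1. (\<sigma>^2 * (\<Sum>i=1..t. (lam i \<omega>)^2)) / 2 + ln c
             < (\<Sum>i=1..t. \<phi> (lam i \<omega> * (X i \<omega> - \<mu>)))}"
  have iff: "(A + ln c < S) \<longleftrightarrow> c < exp (S - A)" for A S :: real
  proof -
    have "(A + ln c < S) \<longleftrightarrow> ln c < S - A" by linarith
    also have "\<dots> \<longleftrightarrow> exp (ln c) < exp (S - A)" by (rule exp_less_cancel_iff[symmetric])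
    finally have "(A + ln c < S) \<longleftrightarrow> exp (ln c) < exp (S - A)" .
    then show ?thesis using c by simp
  qed
  have E_eq: "E = {x\<in>space M. \<exists>t. 1 \<le> t \<and> c < Mt t x}"
    unfolding E_def Mt_exp iff by (rule refl)
  have EM: "E \<in> sets M" unfolding E_eq by measurable
  have EB: "E \<subseteq> (\<Union>k. B k)"
  proof
    fix x assume "x \<in> E"
    then obtain t where xs: "x \<in> space M" and t: "c < Mt t x" unfolding E_eq by auto
    define k where "k = (LEAST t. c < Mt t x)"
    have "c < Mt k x" unfolding k_def using t by (rule LeastI)
    moreover have "\<forall>j<k. Mt j x \<le> c" unfolding k_def using not_less_Least by force
    ultimately show "x \<in> (\<Union>k. B k)" using xs unfolding B_def by auto
  qed
  have rB: "range B \<subseteq> sets M" by auto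
  have "ennreal c * emeasure M E \<le> ennreal c * emeasure M (\<Union>k. B k)"
    by (rule mult_left_mono, rule emeasure_mono[OF EB]) (use rB in auto)
  also have "emeasure M (\<Union>k. B k) = (\<Sum>k. emeasure M (B k))"
    by (rule suminf_emeasure[OF rB disj, symmetric])
  also have "ennreal c * (\<Sum>k. emeasure M (B k)) = (\<Sum>k. ennreal c * emeasure M (B k))"
    by (rule ennreal_suminf_cmult[symmetric])
  also have "\<dots> \<le> 1" by (rule sumle)
  finally have h1: "ennreal c * emeasure M E \<le> 1" .
  have "ennreal c * emeasure M E = ennreal (c * measure M E)"
    unfolding emeasure_eq_measure using c by (subst ennreal_mult) auto
  with h1 have "ennreal (c * measure M E) \<le> 1" by simp
  then have "c * measure M E \<le> 1" by (simp only: ennreal_le_1)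
  then have mE: "measure M E \<le> 1 / c" using c by (simp add: pos_le_divide_eq mult.commute)
  show ?thesis using EM mE unfolding E_def by (rule conjI)
qed

theorem theorem3:
  fixes M :: "'a measure" and F :: "nat \<Rightarrow> 'a measure"
    and X lam :: "nat \<Rightarrow> 'a \<Rightarrow> real" and \<phi> :: "real \<Rightarrow> real"
    and \<mu> \<sigma> \<alpha> :: real
  assumes "prob_space M"
    and subalg: "\<And>t. subalgebra M (F t)"
    and mono_F: "\<And>s t. s \<le> t \<Longrightarrow> sets (F s) \<subseteq> sets (F t)"
    and F0_trivial: "sets (F 0) = {{}, space M}"
    and adapted: "\<And>t. t \<ge> 1 \<Longrightarrow> X t \<in> borel_measurable (F t)"
    and integrable: "\<And>t. t \<ge> 1 \<Longrightarrow> integrable M (X t)"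
    and cond_mean: "\<And>t. t \<ge> 1 \<Longrightarrow> AE \<omega> in M. real_cond_exp M (F (t - 1)) (X t) \<omega> = \<mu>"
    and cond_var: "\<And>t. t \<ge> 1 \<Longrightarrow>
        AE \<omega> in M. nn_cond_exp M (F (t - 1)) (\<lambda>\<omega>. ennreal ((X t \<omega> - \<mu>)^2)) \<omega> \<le> ennreal (\<sigma>^2)"
    and alpha: "0 < \<alpha>" "\<alpha> < 1"
    and predictable: "\<And>t. t \<ge> 1 \<Longrightarrow> lam t \<in> borel_measurable (F (t - 1))"
    and catoni: "catoni_type \<phi>"
  shows "measure M {\<omega> \<in> space M. \<forall>t\<ge>1. \<mu> \<in> CI_catoni \<sigma> \<alpha> \<phi> lam X t \<omega>} \<ge> 1 - \<alpha>"
proof -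
  note P = \<open>prob_space M\<close>
  interpret prob_space M by (rule P)
  have phim[measurable]: "\<phi> \<in> borel_measurable borel"
    using catoni unfolding catoni_type_def by (intro borel_measurable_mono) auto
  have phib: "\<phi> x \<le> ln (1 + x + x^2/2)" for x using catoni unfolding catoni_type_def by auto
  have phil: "- ln (1 - x + x^2/2) \<le> \<phi> x" for x using catoni unfolding catoni_type_def by auto
  define \<psi> where "\<psi> x = - \<phi> (- x)" for x
  have psim[measurable]: "\<psi> \<in> borel_measurable borel" unfolding \<psi>_def by measurable
  have psib: "\<psi> x \<le> ln (1 + x + x^2/2)" for x
    using phil[of "-x"] unfolding \<psi>_def by simp
  have c: "1 < 2 / \<alpha>" using alpha by (simp add: field_simps)
  have pred2: "(\<lambda>x. - lam t x) \<in> borel_measurable (F (t - 1))" if "t \<ge> 1" for t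
    using predictable[OF that] by measurable
  note U1 = upper_lemma[where M=M and F=F and X=X and lam=lam and \<phi>=\<phi> and \<mu>=\<mu> and \<sigma>=\<sigma> and c="2/\<alpha>", OF P subalg mono_F adapted integrable cond_mean cond_var predictable phim phib c]
  note U2 = upper_lemma[where M=M and F=F and X=X and lam="\<lambda>i x. - lam i x" and \<phi>=\<psi> and \<mu>=\<mu> and \<sigma>=\<sigma> and c="2/\<alpha>", OF P subalg mono_F adapted integrable cond_mean cond_var pred2 psim psib c]
  define E1 where "E1 = {\<omega> \<in> space M. \<exists>t\<ge>1. (\<sigma>^2 * (\<Sum>i=1..t. (lam i \<omega>)^2)) / 2 + ln (2/\<alpha>)
             < (\<Sum>i=1..t. \<phi> (lam i \<omega> * (X i \<omega> - \<mu>)))}"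
  define E2 where "E2 = {\<omega> \<in> space M. \<exists>t\<ge>1. (\<sigma>^2 * (\<Sum>i=1..t. (- lam i \<omega>)^2)) / 2 + ln (2/\<alpha>)
             < (\<Sum>i=1..t. \<psi> (- lam i \<omega> * (X i \<omega> - \<mu>)))}"
  have U1': "E1 \<in> sets M \<and> measure M E1 \<le> 1 / (2/\<alpha>)" unfolding E1_def by (rule U1)
  have U2': "E2 \<in> sets M \<and> measure M E2 \<le> 1 / (2/\<alpha>)" unfolding E2_def by (rule U2)
  have E1M: "E1 \<in> sets M" and m1: "measure M E1 \<le> 1 / (2/\<alpha>)" using U1' by blast+
  have E2M: "E2 \<in> sets M" and m2: "measure M E2 \<le> 1 / (2/\<alpha>)" using U2' by blast+
  have low: "((\<sigma>^2 * (\<Sum>i=1..t. (- lam i x)^2)) / 2 + ln (2/\<alpha>) < (\<Sum>i=1..t. \<psi> (- lam i x * (X i x - \<mu>))))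
     \<longleftrightarrow> (\<Sum>i=1..t. \<phi> (lam i x * (X i x - \<mu>))) < - (\<sigma>^2 * (\<Sum>i=1..t. (lam i x)^2)) / 2 - ln (2 / \<alpha>)" for t x
  proof -
    have e1: "(\<Sum>i=1..t. \<psi> (- lam i x * (X i x - \<mu>))) = - (\<Sum>i=1..t. \<phi> (lam i x * (X i x - \<mu>)))"
      unfolding \<psi>_def by (simp add: sum_negf)
    have e2: "(\<Sum>i=1..t. (- lam i x)^2) = (\<Sum>i=1..t. (lam i x)^2)" by simp
    show ?thesis unfolding e1 e2 by linarith
  qed
  have mem: "\<mu> \<in> CI_catoni \<sigma> \<alpha> \<phi> lam X t x \<longleftrightarrow>
      \<not> ((\<sigma>^2 * (\<Sum>i=1..t. (lam i x)^2)) / 2 + ln (2/\<alpha>) < (\<Sum>i=1..t. \<phi> (lam i x * (X i x - \<mu>))))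
    \<and> \<not> ((\<sigma>^2 * (\<Sum>i=1..t. (- lam i x)^2)) / 2 + ln (2/\<alpha>) < (\<Sum>i=1..t. \<psi> (- lam i x * (X i x - \<mu>))))" for t x
    unfolding CI_catoni_def low mem_Collect_eq by linarith
  have Seq: "{\<omega> \<in> space M. \<forall>t\<ge>1. \<mu> \<in> CI_catoni \<sigma> \<alpha> \<phi> lam X t \<omega>} = space M - (E1 \<union> E2)"
  proof (rule set_eqI)
    fix x
    show "x \<in> {\<omega> \<in> space M. \<forall>t\<ge>1. \<mu> \<in> CI_catoni \<sigma> \<alpha> \<phi> lam X t \<omega>} \<longleftrightarrow> x \<in> space M - (E1 \<union> E2)"
      unfolding E1_def E2_def mem by blast
  qed
  have "measure M (E1 \<union> E2) \<le> measure M E1 + measure M E2" by (rule measure_Un_le[OF E1M E2M])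
  also have "\<dots> \<le> 1 / (2/\<alpha>) + 1 / (2/\<alpha>)" using m1 m2 by simp
  also have "\<dots> = \<alpha>" by simp
  finally have "measure M (E1 \<union> E2) \<le> \<alpha>" .
  moreover have "measure M (space M - (E1 \<union> E2)) = 1 - measure M (E1 \<union> E2)"
    using E1M E2M by (intro prob_compl) auto
  ultimately show ?thesis unfolding Seq by simp
qed
end
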